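(* Let $\gamma>0$, $C\ge1$, and let the rows $q_1,q_2,\ldots$ (row vectors in $\mathbb{R}^N$) of an $m\times N$ real matrix $Q$ arrive online. Suppose there is an online algorithm that outputs a sequence of positive semidefinite $N\times N$ matrices $X_0,X_1,X_2,\ldots$ which, at each time step $t\ge1$, either reports that there is no positive semidefinite matrix $X$ with $\mathrm{tr}(X)\le\gamma^2N$ and $X\succeq q_i^Tq_i$ for all $i\in[t]$, or else outputs a new positive semidefinite matrix $X_t$ such that $X_t\succeq X_{t-1}$, $X_t\succeq q_t^Tq_t$, and $\mathrm{tr}(X_t)\le C^2\gamma^2N$. Then there exists an online factorization algorithm that solves the $(\gamma,C)$-bounded online average factorization problem for $Q$.
   Context: $A\succeq B$ means $A-B$ is positive semidefinite. For a matrix, $\|L\|_{2\to\infty}$ is the maximum $\ell_2$ norm of a row, $\|R\|_{1\to2}$ the maximum $\ell_2$ norm of a column, $\|R\|_F$ the Frobenius norm, and $\gamma_2(A)=\min\{\|L\|_{2\to\infty}\|R\|_{1\to2}:LR=A\}$; $Q_t$ is the first $t$ rows of $Q$. The $(\gamma,C)$-bounded online average factorization problem: the algorithm chooses an initial (possibly empty) matrix $R_0$ with $N$ columns; at each time $t\ge1$ it receives $q_t$ and must either (i) form $R_t$ by appending rows to $R_{t-1}$ and output a row $\ell_t$ with $\ell_tR_t=q_t$, such that $\|R_t\|_F\le\sqrt N$ and $\|L_t\|_{2\to\infty}\le C\gamma$ (where $L_t$ has zero-padded rows $\ell_1,\ldots,\ell_t$), or (ii) (correctly) assert that $\gamma_2(Q_t)>\gamma$.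 *)

theory Defs
  imports "HOL-Analysis.Analysis"
begin

text \<open>Row vectors in R^N are elements of real^'n (N = CARD('n)); N x N matrices
are real^'n^'n. A matrix with N columns and some number of rows is represented
by the list of its rows.\<close>

definition psd :: "real^'n^'n \<Rightarrow> bool" where
  "psd X \<longleftrightarrow> transpose X = X \<and> (\<forall>x. 0 \<le> x \<bullet> (X *v x))"

definition loewner_ge :: "real^'n^'n \<Rightarrow> real^'n^'n \<Rightarrow> bool" (infix "\<succeq>\<^sub>L" 50) where
  "A \<succeq>\<^sub>L B \<longleftrightarrow> psd (A - B)"

definition outer :: "real^'n \<Rightarrow> real^'n^'n" where
  "outer q = (\<chi> i j. q $ i * q $ j)"

text \<open>gamma_2 of the t x N matrix whose rows are the list qs:
  min of ||L||_{2->inf} ||R||_{1->2} over factorizations L R = Q with arbitrary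
  inner dimension k; L is t x k (entries L i j, i<t, j<k), R is k x N (rows R j, j<k).\<close>
definition norm_2inf :: "nat \<Rightarrow> nat \<Rightarrow> (nat \<Rightarrow> nat \<Rightarrow> real) \<Rightarrow> real" where
  "norm_2inf t k L = Max (insert 0 {sqrt (\<Sum>j<k. (L i j)\<^sup>2) | i. i < t})"

definition norm_12 :: "nat \<Rightarrow> (nat \<Rightarrow> real^'n) \<Rightarrow> real" where
  "norm_12 k R = Max (insert 0 {sqrt (\<Sum>j<k. (R j $ c)\<^sup>2) | c. c \<in> (UNIV :: 'n set)})"

definition gamma2 :: "(real^'n) list \<Rightarrow> real" where
  "gamma2 qs = Inf {norm_2inf (length qs) k L * norm_12 k R | k L R.
      \<forall>i < length qs. (\<Sum>j<k. L i j *\<^sub>R R j) = qs ! i}"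

text \<open>The output at time t
is A (take t qs) (so it depends only on q_1..q_t); A [] is X_0; None means
"report infeasibility". The run stops at the first report.\<close>
definition sdp_valid ::
  "real \<Rightarrow> real \<Rightarrow> ((real^'n) list \<Rightarrow> (real^'n^'n) option) \<Rightarrow> (real^'n) list \<Rightarrow> bool" where
  "sdp_valid \<gamma> C A qs \<longleftrightarrow>
     (\<exists>X0. A [] = Some X0 \<and> psd X0) \<and>
     (\<forall>t \<in> {1..length qs}.
        (\<forall>s \<in> {1..<t}. A (take s qs) \<noteq> None) \<longrightarrow>
        (A (take t qs) = None \<and>
           \<not> (\<exists>X. psd X \<and> trace X \<le> \<gamma>\<^sup>2 * real CARD('n) \<and>
                  (\<forall>i < t. X \<succeq>\<^sub>L outer (qs ! i))))
        \<or> (\<exists>X. A (take t qs) = Some X \<and> psd X \<and>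
                X \<succeq>\<^sub>L the (A (take (t - 1) qs)) \<and>
                X \<succeq>\<^sub>L outer (qs ! (t - 1)) \<and>
                trace X \<le> C\<^sup>2 * \<gamma>\<^sup>2 * real CARD('n)))"

text \<open>Validity of an online factorization algorithm on input rows qs: R0 is the
initial matrix (list of rows); F (take t qs) is the output at time t, either None
(assert gamma2(Q_t) > gamma) or Some (R_t, l_t). The run stops at the first assertion.\<close>
definition fact_R ::
  "(real^'n) list \<Rightarrow> ((real^'n) list \<Rightarrow> ((real^'n) list \<times> real list) option)
     \<Rightarrow> (real^'n) list \<Rightarrow> nat \<Rightarrow> (real^'n) list" where
  "fact_R R0 F qs t = (if t = 0 then R0 else fst (the (F (take t qs))))"

definition fact_l ::
  "((real^'n) list \<Rightarrow> ((real^'n) list \<times> real list) option)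
     \<Rightarrow> (real^'n) list \<Rightarrow> nat \<Rightarrow> real list" where
  "fact_l F qs t = snd (the (F (take t qs)))"

definition fact_valid ::
  "real \<Rightarrow> real \<Rightarrow> (real^'n) list \<Rightarrow> ((real^'n) list \<Rightarrow> ((real^'n) list \<times> real list) option)
     \<Rightarrow> (real^'n) list \<Rightarrow> bool" where
  "fact_valid \<gamma> C R0 F qs \<longleftrightarrow>
     (\<forall>t \<in> {1..length qs}.
        (\<forall>s \<in> {1..<t}. F (take s qs) \<noteq> None) \<longrightarrow>
        (F (take t qs) = None \<and> gamma2 (take t qs) > \<gamma>)
        \<or> (F (take t qs) \<noteq> None \<and>
           (\<exists>D. fact_R R0 F qs t = fact_R R0 F qs (t - 1) @ D) \<and>
           length (fact_l F qs t) = length (fact_R R0 F qs t) \<and>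
           (\<Sum>j < length (fact_R R0 F qs t).
               fact_l F qs t ! j *\<^sub>R fact_R R0 F qs t ! j) = qs ! (t - 1) \<and>
           sqrt (\<Sum>j < length (fact_R R0 F qs t). (norm (fact_R R0 F qs t ! j))\<^sup>2)
               \<le> sqrt (real CARD('n)) \<and>
           (\<forall>s \<in> {1..t}. sqrt (\<Sum>j < length (fact_l F qs s). (fact_l F qs s ! j)\<^sup>2)
               \<le> C * \<gamma>)))"

end

theory Submission
  imports Defs
begin

lemma quad_nonneg_disc:
  fixes a b c :: real
  assumes h: "\<And>l. 0 \<le> a + 2*l*b + l^2*c"
  shows "b^2 \<le> a*c"
proof -
  have c0: "0 \<le> c"
  proof (rule ccontr)
    assume "\<not> 0 \<le> c"
    hence cn: "c < 0" by simp
    define l where "l = (\<bar>a\<bar> + 1) / (-c) + 1"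
    have l1: "l \<ge> 1" using cn unfolding l_def by (simp add: field_simps)
    have l2: "l * (-c) \<ge> \<bar>a\<bar> + 1" using cn unfolding l_def by (simp add: field_simps)
    have "l^2 * (-c) \<ge> l * (-c)" using l1 cn by (simp add: power2_eq_square)
    hence "a + l^2*c < 0" using l2 by linarith
    moreover have "0 \<le> a + l^2*c" using h[of l] h[of "-l"] by simp
    ultimately show False by simp
  qed
  show ?thesis
  proof (cases "c = 0")
    case True
    have "b = 0"
    proof (rule ccontr)
      assume "b \<noteq> 0"
      have "0 \<le> a + 2*(-(a+1)/(2*b))*b" using h[of "-(a+1)/(2*b)"] True by simp
      also have "\<dots> = -1" using \<open>b \<noteq> 0\<close> by (simp add: field_simps)
      finally show False by simp
    qed
    thus ?thesis using True by simp
  next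
    case False
    hence cp: "c > 0" using c0 by simp
    have "0 \<le> a + 2*(-b/c)*b + (-b/c)^2*c" by (rule h)
    also have "\<dots> = (a*c - b^2)/c" using cp by (simp add: field_simps power2_eq_square)
    finally show ?thesis using cp by (simp add: zero_le_divide_iff)
  qed
qed

lemma sym_qf:
  fixes M :: "real^'n^'n"
  assumes "transpose M = M"
  shows "x \<bullet> (M *v y) = y \<bullet> (M *v x)"
proof -
  have "x \<bullet> (M *v y) = (x v* M) \<bullet> y" by (simp add: dot_lmul_matrix)
  also have "x v* M = transpose M *v x" by simp
  finally show ?thesis using assms by (simp add: inner_commute)
qed

lemma psd_CS:
  fixes M :: "real^'n^'n"
  assumes "psd M"
  shows "(x \<bullet> (M *v y))^2 \<le> (x \<bullet> (M *v x)) * (y \<bullet> (M *v y))"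
proof -
  have s: "transpose M = M" and p: "\<And>z. 0 \<le> z \<bullet> (M *v z)" using assms unfolding psd_def by auto
  have e: "(x + l *\<^sub>R y) \<bullet> (M *v (x + l *\<^sub>R y)) =
      x \<bullet> (M *v x) + 2*l*(x \<bullet> (M *v y)) + l^2 * (y \<bullet> (M *v y))" for l
    using sym_qf[OF s, of y x]
    by (simp add: algebra_simps inner_add_left inner_add_right power2_eq_square)
  show ?thesis
    by (rule quad_nonneg_disc) (metis e p)
qed

lemma outer_mv: "outer q *v y = (q \<bullet> y) *\<^sub>R q"
  by (simp add: vec_eq_iff outer_def matrix_vector_mult_def inner_vec_def sum_distrib_left mult_ac)

lemma transpose_outer: "transpose (outer q) = outer q"
  by (simp add: vec_eq_iff outer_def transpose_def mult.commute)

lemma psd_outer: "psd (outer q)"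
  by (auto simp: psd_def transpose_outer outer_mv) (metis inner_commute zero_le_square)

lemma qf_axis: "axis i 1 \<bullet> ((D::real^'n^'n) *v axis j 1) = D$i$j"
  unfolding inner_axis' by (simp add: matrix_vector_mult_def axis_def mult.commute[of _ "if _ then _ else _"] if_distrib[of "\<lambda>t. t * _"] cong: if_cong)

lemma psd_diag: "psd D \<Longrightarrow> 0 \<le> D$i$i"
  using qf_axis[of i D i] unfolding psd_def by metis

lemma psd_zero_diag: assumes "psd D" "D$i$i = 0" shows "D$i$j = 0"
proof -
  have "(D$i$j)^2 \<le> D$i$i * D$j$j" using psd_CS[OF assms(1), of "axis i 1" "axis j 1"] by (simp add: qf_axis)
  thus ?thesis using assms(2) by simp
qed

lemma psd_decomp_aux:
  "\<And>D::real^'n^'n. psd D \<Longrightarrow> card {i. D$i$i \<noteq> 0} = m \<Longrightarrow> \<exists>rs. sum_list (map outer rs) = D"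
proof (induction m rule: less_induct)
  case (less m D)
  show ?case
  proof (cases "\<exists>i. D$i$i \<noteq> 0")
    case False
    hence "D = 0" using psd_zero_diag[OF less.prems(1)] by (auto simp: vec_eq_iff)
    thus ?thesis by (intro exI[of _ "[]"]) simp
  next
    case True
    then obtain i where di: "D$i$i \<noteq> 0" by blast
    define d where "d = D$i$i"
    have dp: "d > 0" using psd_diag[OF less.prems(1), of i] di unfolding d_def by linarith
    have s: "transpose D = D" using less.prems(1) by (simp add: psd_def)
    define r where "r = (1 / sqrt d) *\<^sub>R (D *v axis i 1)"
    have rj: "r$j = D$j$i / sqrt d" for j
      unfolding r_def using qf_axis[of j D i] by (simp add: inner_axis')
    define D' where "D' = D - outer r"
    have D'jj: "D'$j$j = D$j$j - (D$j$i)^2 / d" for j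
      unfolding D'_def using dp by (simp add: outer_def rj power2_eq_square)
    have psd': "psd D'"
      unfolding psd_def
    proof
      have "transpose D' = transpose D - transpose (outer r)" unfolding D'_def
        by (simp add: vec_eq_iff transpose_def)
      thus "transpose D' = D'" using s transpose_outer[of r] unfolding D'_def by simp
      show "\<forall>x. 0 \<le> x \<bullet> (D' *v x)"
      proof
        fix x
        have e1: "x \<bullet> (D' *v x) = x \<bullet> (D *v x) - (r \<bullet> x)^2"
          unfolding D'_def by (simp add: matrix_vector_mult_diff_rdistrib outer_mv inner_diff_right power2_eq_square inner_commute[of x r])
        have e2: "r \<bullet> x = (x \<bullet> (D *v axis i 1)) / sqrt d"
          unfolding r_def by (simp add: inner_commute)
        have cs: "(x \<bullet> (D *v axis i 1))^2 \<le> x \<bullet> (D *v x) * d"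
          using psd_CS[OF less.prems(1), of x "axis i 1"] by (simp add: qf_axis d_def)
        have "(r \<bullet> x)^2 = (x \<bullet> (D *v axis i 1))^2 / d"
          using dp by (simp add: e2 power_divide)
        also have "\<dots> \<le> x \<bullet> (D *v x)" using cs dp by (simp add: divide_le_eq)
        finally show "0 \<le> x \<bullet> (D' *v x)" using e1 by simp
      qed
    qed
    have sub: "{j. D'$j$j \<noteq> 0} \<subset> {j. D$j$j \<noteq> 0}"
    proof -
      have "D'$i$i = 0" using D'jj[of i] dp unfolding d_def by (simp add: power2_eq_square)
      moreover have "D'$j$j = 0" if "D$j$j = 0" for j
        using D'jj[of j] that psd_diag[OF psd', of j] dp
        by (smt (verit) divide_nonneg_pos zero_le_power2)
      ultimately show ?thesis using di by blast
    qed
    have fin: "finite {j. D$j$j \<noteq> 0}" by simp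
    have "card {j. D'$j$j \<noteq> 0} < m" using psubset_card_mono[OF fin sub] less.prems(2) by simp
    then obtain rs where "sum_list (map outer rs) = D'" using less.IH psd' by blast
    hence "sum_list (map outer (r # rs)) = D" unfolding D'_def by simp
    thus ?thesis by blast
  qed
qed

lemma psd_decomp: "psd (D::real^'n^'n) \<Longrightarrow> \<exists>rs. sum_list (map outer rs) = D"
  using psd_decomp_aux by blast

lemma psd_add: "psd A \<Longrightarrow> psd B \<Longrightarrow> psd (A + B)"
  unfolding psd_def
  by (auto simp: vec_eq_iff transpose_def matrix_vector_mult_add_rdistrib inner_add_right add_nonneg_nonneg)

lemma psd_zero: "psd (0::real^'n^'n)"
  by (simp add: psd_def vec_eq_iff transpose_def)

lemma psd_sum_outer: "psd (sum_list (map outer rs))"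
  by (induction rs) (simp_all add: psd_zero psd_add psd_outer)

lemma mv_sum_outer: "sum_list (map outer rs) *v y = sum_list (map (\<lambda>r. (r \<bullet> y) *\<^sub>R r) rs)"
  by (induction rs) (simp_all add: matrix_vector_mult_add_rdistrib outer_mv)

lemma qf_sum_outer: "y \<bullet> (sum_list (map outer rs) *v y) = sum_list (map (\<lambda>r. (r \<bullet> y)^2) rs)"
  by (induction rs) (simp_all add: matrix_vector_mult_add_rdistrib outer_mv inner_add_right power2_eq_square inner_commute)

lemma range_sym:
  fixes M :: "real^'n^'n"
  assumes s: "transpose M = M" and k: "\<And>y. M *v y = 0 \<Longrightarrow> q \<bullet> y = 0"
  shows "\<exists>x. M *v x = q"
proof -
  obtain y z where y: "y \<in> span (range (\<lambda>x. M *v x))"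
    and z: "\<And>w. w \<in> span (range (\<lambda>x. M *v x)) \<Longrightarrow> orthogonal z w" and q: "q = y + z"
    using orthogonal_subspace_decomp_exists by blast
  have "z \<bullet> (M *v w) = 0" for w using z[of "M *v w"] by (simp add: span_base orthogonal_def)
  hence "(M *v z) \<bullet> w = 0" for w using sym_qf[OF s, of w z] by (simp add: inner_commute)
  hence "M *v z = 0" by (metis inner_eq_zero_iff)
  hence "q \<bullet> z = 0" by (rule k)
  moreover have "y \<bullet> z = 0" using z[OF y] by (simp add: orthogonal_def inner_commute)
  ultimately have "z = 0" using q by (simp add: inner_add_left)
  hence "q \<in> span (range (\<lambda>x. M *v x))" using q y by simp
  also have "\<dots> = (\<lambda>x. M *v x) ` span UNIV" by (simp add: span_linear_image)
  finally show ?thesis by blast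
qed

lemma ell_exists:
  fixes rs :: "(real^'n) list" and c :: real
  assumes c: "c > 0"
    and h: "\<And>y. (q \<bullet> y)^2 \<le> c^2 * (y \<bullet> (sum_list (map outer rs) *v y))"
  shows "\<exists>l. length l = length rs \<and> (\<Sum>j<length rs. l!j *\<^sub>R rs!j) = q \<and>
     sqrt (\<Sum>j<length rs. (l!j)^2) \<le> c"
proof -
  let ?M = "sum_list (map outer rs)"
  have s: "transpose ?M = ?M" using psd_sum_outer unfolding psd_def by blast
  have "\<exists>x. ?M *v x = (1/c) *\<^sub>R q"
  proof (rule range_sym[OF s])
    fix y assume "?M *v y = 0"
    hence "(q \<bullet> y)^2 \<le> 0" using h[of y] by simp
    thus "((1/c) *\<^sub>R q) \<bullet> y = 0" by simp
  qed
  then obtain x where x: "?M *v x = (1/c) *\<^sub>R q" by blast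
  define l where "l = map (\<lambda>r. c * (r \<bullet> x)) rs"
  have "(\<Sum>j<length rs. l!j *\<^sub>R rs!j) = c *\<^sub>R sum_list (map (\<lambda>r. (r \<bullet> x) *\<^sub>R r) rs)"
    unfolding l_def sum_list_sum_nth by (simp add: atLeast0LessThan scaleR_sum_right)
  also have "\<dots> = q" using x c by (simp add: mv_sum_outer[symmetric])
  finally have e1: "(\<Sum>j<length rs. l!j *\<^sub>R rs!j) = q" .
  have "(\<Sum>j<length rs. (l!j)^2) = c^2 * sum_list (map (\<lambda>r. (r \<bullet> x)^2) rs)"
    unfolding l_def sum_list_sum_nth by (simp add: atLeast0LessThan sum_distrib_left power_mult_distrib)
  also have "\<dots> = c^2 * (x \<bullet> (?M *v x))" by (simp add: qf_sum_outer)
  also have "\<dots> = c * (q \<bullet> x)" using x c by (simp add: power2_eq_square inner_commute)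
  finally have e2: "(\<Sum>j<length rs. (l!j)^2) = c * (q \<bullet> x)" .
  have "(q \<bullet> x)^2 \<le> c * (q \<bullet> x)" using h[of x] x c by (simp add: power2_eq_square inner_commute)
  hence "q \<bullet> x \<le> c"
  proof -
    assume a: "(q \<bullet> x)^2 \<le> c * (q \<bullet> x)"
    show ?thesis
    proof (rule ccontr)
      assume "\<not> q \<bullet> x \<le> c"
      hence "c * (q \<bullet> x) < (q \<bullet> x) * (q \<bullet> x)" using c by (intro mult_strict_right_mono) auto
      thus False using a by (simp add: power2_eq_square)
    qed
  qed
  hence "(\<Sum>j<length rs. (l!j)^2) \<le> c^2" using e2 c by (simp add: power2_eq_square)
  hence "sqrt (\<Sum>j<length rs. (l!j)^2) \<le> sqrt (c^2)" by (rule real_sqrt_le_mono)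
  hence "sqrt (\<Sum>j<length rs. (l!j)^2) \<le> c" using c by simp
  moreover have "length l = length rs" unfolding l_def by simp
  ultimately show ?thesis using e1 by blast
qed

lemma cont_entry: "continuous_on S (\<lambda>X::real^'n^'m. X$i$j)"
  unfolding continuous_on_def by (auto intro!: tendsto_vec_nth tendsto_ident_at)

lemma qf_expand: "x \<bullet> (M *v x) = (\<Sum>i\<in>UNIV. x$i * (\<Sum>j\<in>UNIV. M$i$j * x$j))"
  by (simp add: inner_vec_def matrix_vector_mult_def)

lemma closed_psd_shift: "closed {X::real^'n^'n. psd (X - B)}"
proof -
  have e: "{X::real^'n^'n. psd (X - B)} =
     (\<Inter>i. \<Inter>j. {X. (X - B)$i$j - (X - B)$j$i = 0}) \<inter> (\<Inter>x. {X. 0 \<le> x \<bullet> ((X - B) *v x)})"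
    unfolding psd_def by (auto simp: vec_eq_iff transpose_def)
  have c1: "closed {X::real^'n^'n. (X - B)$i$j - (X - B)$j$i = 0}" for i j
    by (intro closed_Collect_eq continuous_intros cont_entry) 
  have c2: "closed {X::real^'n^'n. 0 \<le> x \<bullet> ((X - B) *v x)}" for x
    unfolding qf_expand
    by (intro closed_Collect_le continuous_intros cont_entry)
  show ?thesis unfolding e using c1 c2 by (intro closed_Int closed_INT) auto
qed

lemma closed_trace_le: "closed {X::real^'n^'n. trace X \<le> b}"
  unfolding trace_def by (intro closed_Collect_le continuous_intros cont_entry)

lemma diag_le_trace: "psd X \<Longrightarrow> X$i$i \<le> trace X"
  unfolding trace_def by (rule member_le_sum) (auto simp: psd_diag)

lemma entry_le_trace:
  assumes "psd X" shows "\<bar>X$i$j\<bar> \<le> trace X"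
proof -
  have "(X$i$j)^2 \<le> X$i$i * X$j$j" using psd_CS[OF assms, of "axis i 1" "axis j 1"] by (simp add: qf_axis)
  also have "\<dots> \<le> trace X * trace X"
    using diag_le_trace[OF assms] psd_diag[OF assms] by (intro mult_mono) (auto intro: order_trans)
  finally have "\<bar>X$i$j\<bar>^2 \<le> (trace X)^2" by (simp add: power2_eq_square)
  moreover have "0 \<le> trace X" using diag_le_trace[OF assms, of i] psd_diag[OF assms, of i] by linarith
  ultimately show ?thesis by (rule power2_le_imp_le)
qed

lemma compact_psd_trace: "compact {X::real^'n^'n. psd X \<and> trace X \<le> b}"
proof -
  have "norm X \<le> real CARD('n) * real CARD('n) * b" if "psd X" "trace X \<le> b" for X :: "real^'n^'n"
  proof -
    have "norm X \<le> (\<Sum>i\<in>UNIV. norm (X$i))" unfolding norm_vec_def by (rule L2_set_le_sum) auto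
    also have "\<dots> \<le> (\<Sum>i\<in>(UNIV::'n set). \<Sum>j\<in>(UNIV::'n set). \<bar>X$i$j\<bar>)"
      by (intro sum_mono norm_le_l1_cart)
    also have "\<dots> \<le> (\<Sum>i\<in>(UNIV::'n set). \<Sum>j\<in>(UNIV::'n set). b)"
      using entry_le_trace[OF that(1)] that(2) by (intro sum_mono) (meson order_trans)
    finally show ?thesis by simp
  qed
  hence "bounded {X::real^'n^'n. psd X \<and> trace X \<le> b}" unfolding bounded_iff by blast
  moreover have "closed {X::real^'n^'n. psd X \<and> trace X \<le> b}"
    using closed_Int[OF closed_psd_shift[of 0] closed_trace_le[of b]] by (simp add: Collect_conj_eq)
  ultimately show ?thesis by (simp add: compact_eq_bounded_closed)
qed

lemma limit_feasible:
  fixes p :: "nat \<Rightarrow> real^'n" and \<gamma> :: real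
  assumes g: "\<gamma> \<ge> 0"
    and h: "\<And>m. \<exists>X::real^'n^'n. psd X \<and> trace X \<le> (\<gamma> + inverse (real (Suc m)))^2 * real CARD('n)
              \<and> (\<forall>i<n. psd (X - outer (p i)))"
  shows "\<exists>X::real^'n^'n. psd X \<and> trace X \<le> \<gamma>^2 * real CARD('n) \<and> (\<forall>i<n. psd (X - outer (p i)))"
proof -
  define S where "S = {X::real^'n^'n. psd X \<and> trace X \<le> (\<gamma> + 1)^2 * real CARD('n)}"
  define P where "P = {X::real^'n^'n. \<forall>i<n. psd (X - outer (p i))}"
  define K where "K m = {X::real^'n^'n. trace X \<le> (\<gamma> + inverse (real (Suc m)))^2 * real CARD('n)} \<inter> P" for m
  have cS: "compact S" unfolding S_def by (rule compact_psd_trace)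
  have cP: "closed P"
  proof -
    have "P = (\<Inter>i\<in>{..<n}. {X. psd (X - outer (p i))})" unfolding P_def by auto
    thus ?thesis using closed_psd_shift by (metis closed_INT)
  qed
  have cK: "closed T" if "T \<in> range K" for T
    using that unfolding K_def using closed_trace_le cP by auto
  have mono: "(\<gamma> + inverse (real (Suc m2)))^2 \<le> (\<gamma> + inverse (real (Suc m1)))^2" if "m1 \<le> m2" for m1 m2
    using that g by (intro power_mono) (auto simp: field_simps)
  have fip: "S \<inter> \<Inter>F' \<noteq> {}" if F1: "finite F'" and F2: "F' \<subseteq> range K" for F'
  proof -
    obtain M where M: "finite M" "F' = K ` M" using finite_subset_image[OF F1 F2] by blast
    define m where "m = Max (insert 0 M)"
    obtain X where X: "psd X" "trace X \<le> (\<gamma> + inverse (real (Suc m)))^2 * real CARD('n)"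
      "\<forall>i<n. psd (X - outer (p i))" using h by blast
    have "X \<in> S"
    proof -
      have "(\<gamma> + inverse (real (Suc m)))^2 \<le> (\<gamma> + inverse (real (Suc 0)))^2" by (rule mono) simp
      hence "trace X \<le> (\<gamma> + 1)^2 * real CARD('n)" using X(2)
        by (smt (verit) mult_right_mono of_nat_0_le_iff One_nat_def of_nat_1 inverse_1 Suc_eq_plus1 add_0)
      thus ?thesis unfolding S_def using X by auto
    qed
    moreover have "X \<in> K m'" if "m' \<in> M" for m'
    proof -
      have "m' \<le> m" unfolding m_def using that M(1) by simp
      hence "(\<gamma> + inverse (real (Suc m)))^2 * real CARD('n) \<le> (\<gamma> + inverse (real (Suc m')))^2 * real CARD('n)"
        using mono by (intro mult_right_mono) auto
      hence "trace X \<le> (\<gamma> + inverse (real (Suc m')))^2 * real CARD('n)" using X(2) by linarith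
      thus ?thesis unfolding K_def P_def using X(3) by blast
    qed
    ultimately show ?thesis using M(2) by blast
  qed
  have "S \<inter> \<Inter>(range K) \<noteq> {}" by (rule compact_imp_fip[OF cS cK fip])
  then obtain X where XS: "X \<in> S" and XK: "\<And>m. X \<in> K m" by blast
  have lim: "(\<lambda>m. (\<gamma> + inverse (real (Suc m)))^2 * real CARD('n)) \<longlonglongrightarrow> (\<gamma> + 0)^2 * real CARD('n)"
    by (intro tendsto_intros LIMSEQ_inverse_real_of_nat)
  have "trace X \<le> (\<gamma> + 0)^2 * real CARD('n)"
    by (rule LIMSEQ_le_const[OF lim]) (use XK in \<open>auto simp: K_def\<close>)
  moreover have "psd X" using XS unfolding S_def by auto
  moreover have "X \<in> P" using XK[of 0] unfolding K_def by auto
  ultimately show ?thesis unfolding P_def by auto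
qed

lemma psd_scale: "psd A \<Longrightarrow> 0 \<le> a \<Longrightarrow> psd (a *\<^sub>R A)"
proof -
  assume p: "psd A" and a: "0 \<le> a"
  have t: "transpose (a *\<^sub>R A) = a *\<^sub>R transpose A" by (simp add: vec_eq_iff transpose_def)
  have q: "x \<bullet> ((a *\<^sub>R A) *v x) = a * (x \<bullet> (A *v x))" for x
    by (simp add: scaleR_matrix_vector_assoc[symmetric])
  show ?thesis using p a unfolding psd_def t q by simp
qed

lemma G_mv:
  fixes k :: nat and R :: "nat \<Rightarrow> real^'n"
  shows "(\<Sum>j<k. outer (R j)) *v y = (\<Sum>j<k. (R j \<bullet> y) *\<^sub>R R j)"
  by (induction k) (simp_all add: matrix_vector_mult_add_rdistrib outer_mv)

lemma G_qf:
  fixes k :: nat and R :: "nat \<Rightarrow> real^'n"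
  shows "y \<bullet> ((\<Sum>j<k. outer (R j)) *v y) = (\<Sum>j<k. (R j \<bullet> y)^2)"
  by (induction k) (simp_all add: matrix_vector_mult_add_rdistrib outer_mv inner_add_right power2_eq_square inner_commute)

lemma G_psd:
  fixes k :: nat and R :: "nat \<Rightarrow> real^'n"
  shows "psd (\<Sum>j<k. outer (R j))"
  by (induction k) (simp_all add: psd_zero psd_add psd_outer)

lemma norm_2inf_ge: "i < t \<Longrightarrow> sqrt (\<Sum>j<k. (L i j)^2) \<le> norm_2inf t k L"
  unfolding norm_2inf_def by (rule Max_ge) auto

lemma norm_2inf_nonneg: "0 \<le> norm_2inf t k L"
  unfolding norm_2inf_def by (rule Max_ge) auto

lemma norm_12_set: "{sqrt (\<Sum>j<k. (R j $ c)\<^sup>2) | c. c \<in> (UNIV :: 'n set)} = range (\<lambda>c. sqrt (\<Sum>j<k. ((R::nat \<Rightarrow> real^'n) j $ c)\<^sup>2))"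
  by auto

lemma norm_12_ge: "sqrt (\<Sum>j<k. (R j $ c)^2) \<le> norm_12 k R"
  unfolding norm_12_def norm_12_set by (rule Max_ge) auto

lemma norm_12_nonneg: "0 \<le> norm_12 k R"
  unfolding norm_12_def norm_12_set by (rule Max_ge) auto

lemma sq_le_of_sqrt_le: "sqrt s \<le> a \<Longrightarrow> 0 \<le> s \<Longrightarrow> s \<le> a^2"
  by (metis real_sqrt_le_iff real_sqrt_pow2 power_mono real_sqrt_ge_zero)

lemma fact_to_X:
  fixes ps :: "(real^'n) list" and R :: "nat \<Rightarrow> real^'n"
  assumes f: "\<forall>i<length ps. (\<Sum>j<k. L i j *\<^sub>R R j) = ps ! i"
  shows "\<exists>X::real^'n^'n. psd X \<and> trace X \<le> (norm_2inf (length ps) k L * norm_12 k R)^2 * real CARD('n)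
     \<and> (\<forall>i<length ps. psd (X - outer (ps ! i)))"
proof -
  let ?a = "norm_2inf (length ps) k L" and ?b = "norm_12 k R"
  define G where "G = (\<Sum>j<k. outer (R j))"
  define X where "X = ?a^2 *\<^sub>R G"
  have psdX: "psd X" unfolding X_def G_def by (intro psd_scale G_psd) simp
  have "trace G = (\<Sum>c\<in>UNIV. \<Sum>j<k. (R j $ c)^2)"
    unfolding G_def trace_def by (simp add: outer_def power2_eq_square)
  also have "\<dots> \<le> (\<Sum>c\<in>(UNIV::'n set). ?b^2)"
  proof (rule sum_mono)
    fix c :: 'n
    show "(\<Sum>j<k. (R j $ c)^2) \<le> ?b^2"
      by (rule sq_le_of_sqrt_le[OF norm_12_ge]) (simp add: sum_nonneg)
  qed
  finally have trG: "trace G \<le> real CARD('n) * ?b^2" by simp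
  have "trace X = ?a^2 * trace G" unfolding X_def trace_def by (simp add: sum_distrib_left)
  also have "\<dots> \<le> ?a^2 * (real CARD('n) * ?b^2)" by (intro mult_left_mono trG) simp
  finally have trX: "trace X \<le> (?a * ?b)^2 * real CARD('n)" by (simp add: power_mult_distrib mult_ac)
  have dom: "psd (X - outer (ps ! i))" if i: "i < length ps" for i
    unfolding psd_def
  proof
    have sG: "transpose G = G" using G_psd unfolding G_def psd_def by blast
    have "transpose (X - outer (ps ! i)) = ?a^2 *\<^sub>R transpose G - transpose (outer (ps ! i))"
      unfolding X_def by (simp add: vec_eq_iff transpose_def)
    thus "transpose (X - outer (ps ! i)) = X - outer (ps ! i)"
      using sG transpose_outer[of "ps ! i"] unfolding X_def by simp
    show "\<forall>y. 0 \<le> y \<bullet> ((X - outer (ps ! i)) *v y)"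
    proof
      fix y
      have e1: "y \<bullet> ((X - outer (ps ! i)) *v y) = ?a^2 * (\<Sum>j<k. (R j \<bullet> y)^2) - (ps ! i \<bullet> y)^2"
      proof -
        have "y \<bullet> ((X - outer (ps ! i)) *v y) = y \<bullet> (X *v y) - (ps ! i \<bullet> y)^2"
          by (simp add: matrix_vector_mult_diff_rdistrib inner_diff_right outer_mv power2_eq_square inner_commute[of y "ps ! i"])
        moreover have "y \<bullet> (X *v y) = ?a^2 * (y \<bullet> (G *v y))"
          unfolding X_def by (simp add: scaleR_matrix_vector_assoc[symmetric])
        ultimately show ?thesis unfolding G_def G_qf by simp
      qed
      have pi: "ps ! i = (\<Sum>j<k. L i j *\<^sub>R R j)" using f i by simp
      have "ps ! i \<bullet> y = (\<Sum>j<k. L i j * (R j \<bullet> y))" unfolding pi by (simp add: inner_sum_left)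
      hence "(ps ! i \<bullet> y)^2 \<le> (\<Sum>j<k. (L i j)^2) * (\<Sum>j<k. (R j \<bullet> y)^2)"
        using Cauchy_Schwarz_ineq_sum[of "\<lambda>j. L i j" "\<lambda>j. R j \<bullet> y" "{..<k}"] by simp
      also have "\<dots> \<le> ?a^2 * (\<Sum>j<k. (R j \<bullet> y)^2)"
        by (intro mult_right_mono sq_le_of_sqrt_le[OF norm_2inf_ge[OF i]]) (simp_all add: sum_nonneg)
      finally show "0 \<le> y \<bullet> ((X - outer (ps ! i)) *v y)" using e1 by simp
    qed
  qed
  show ?thesis using psdX trX dom by blast
qed

lemma gamma2_gt:
  fixes ps :: "(real^'n) list" and \<gamma> :: real
  assumes g: "\<gamma> \<ge> 0"
    and nf: "\<not> (\<exists>X::real^'n^'n. psd X \<and> trace X \<le> \<gamma>^2 * real CARD('n) \<and> (\<forall>i<length ps. X \<succeq>\<^sub>L outer (ps ! i)))"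
  shows "gamma2 ps > \<gamma>"
proof (rule ccontr)
  assume "\<not> gamma2 ps > \<gamma>"
  hence le: "gamma2 ps \<le> \<gamma>" by simp
  define SS where "SS = {norm_2inf (length ps) k L * norm_12 k R | k L R.
      \<forall>i < length ps. (\<Sum>j<k. L i j *\<^sub>R R j) = ps ! i}"
  have ne: "SS \<noteq> {}"
  proof -
    define L0 where "L0 = (\<lambda>i j::nat. if i = j then (1::real) else 0)"
    define R0 where "R0 = (\<lambda>j. ps ! j)"
    have h: "\<forall>i < length ps. (\<Sum>j<length ps. L0 i j *\<^sub>R R0 j) = ps ! i"
    proof (intro allI impI)
      fix i assume i: "i < length ps"
      have "(\<Sum>j<length ps. L0 i j *\<^sub>R R0 j) = (\<Sum>j<length ps. if i = j then ps ! j else 0)"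
        by (rule sum.cong) (auto simp: L0_def R0_def)
      also have "\<dots> = ps ! i" using i by simp
      finally show "(\<Sum>j<length ps. L0 i j *\<^sub>R R0 j) = ps ! i" .
    qed
    have "norm_2inf (length ps) (length ps) L0 * norm_12 (length ps) R0 \<in> SS"
      unfolding SS_def mem_Collect_eq
      by (rule exI[of _ "length ps"], rule exI[of _ L0], rule exI[of _ R0]) (use h in simp)
    thus ?thesis by blast
  qed
  have "\<exists>X::real^'n^'n. psd X \<and> trace X \<le> (\<gamma> + inverse (real (Suc m)))^2 * real CARD('n)
              \<and> (\<forall>i<length ps. psd (X - outer (ps ! i)))" for m
  proof -
    have ip: "0 < inverse (real (Suc m))" by simp
    have "Inf SS = gamma2 ps" unfolding gamma2_def SS_def by simp
    hence "Inf SS < \<gamma> + inverse (real (Suc m))" using le ip by linarith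
    then obtain s where "s \<in> SS" "s < \<gamma> + inverse (real (Suc m))" using cInf_lessD[OF ne] by blast
    then obtain k L R where f: "\<forall>i < length ps. (\<Sum>j<k. L i j *\<^sub>R R j) = ps ! i"
      and s: "norm_2inf (length ps) k L * norm_12 k R < \<gamma> + inverse (real (Suc m))"
      unfolding SS_def mem_Collect_eq by blast
    obtain X :: "real^'n^'n" where X: "psd X" "trace X \<le> (norm_2inf (length ps) k L * norm_12 k R)^2 * real CARD('n)"
       "\<forall>i<length ps. psd (X - outer (ps ! i))" using fact_to_X[OF f] by blast
    have "(norm_2inf (length ps) k L * norm_12 k R)^2 \<le> (\<gamma> + inverse (real (Suc m)))^2"
      using s norm_2inf_nonneg[of "length ps" k L] norm_12_nonneg[of k R] by (intro power_mono) auto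
    hence "(norm_2inf (length ps) k L * norm_12 k R)^2 * real CARD('n) \<le> (\<gamma> + inverse (real (Suc m)))^2 * real CARD('n)"
      by (rule mult_right_mono) simp
    hence "trace X \<le> (\<gamma> + inverse (real (Suc m)))^2 * real CARD('n)"
      using X(2) by linarith
    thus ?thesis using X by blast
  qed
  then obtain X :: "real^'n^'n" where "psd X" "trace X \<le> \<gamma>^2 * real CARD('n)"
    "\<forall>i<length ps. psd (X - outer (ps ! i))" using limit_feasible[OF g] by blast
  hence "\<exists>X::real^'n^'n. psd X \<and> trace X \<le> \<gamma>^2 * real CARD('n) \<and> (\<forall>i<length ps. X \<succeq>\<^sub>L outer (ps ! i))"
    unfolding loewner_ge_def by blast
  thus False using nf by blast
qed

definition fac :: "real^'n^'n \<Rightarrow> (real^'n) list" where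
  "fac D = (SOME rs. sum_list (map outer rs) = D)"

lemma fac: "psd D \<Longrightarrow> sum_list (map outer (fac D)) = D"
  unfolding fac_def using psd_decomp by (rule someI_ex)

definition blk :: "real \<Rightarrow> ((real^'n) list \<Rightarrow> (real^'n^'n) option) \<Rightarrow> (real^'n) list \<Rightarrow> nat \<Rightarrow> (real^'n) list" where
  "blk c A qs k = (if k = 0 then fac ((1/c^2) *\<^sub>R the (A []))
      else fac ((1/c^2) *\<^sub>R (the (A (take k qs)) - the (A (take (k-1) qs)))))"

definition Rrows :: "real \<Rightarrow> ((real^'n) list \<Rightarrow> (real^'n^'n) option) \<Rightarrow> (real^'n) list \<Rightarrow> (real^'n) list" where
  "Rrows c A qs = concat (map (blk c A qs) [0..<Suc (length qs)])"

definition ellf :: "real \<Rightarrow> (real^'n) list \<Rightarrow> real^'n \<Rightarrow> real list" where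
  "ellf c rs q = (SOME l. length l = length rs \<and> (\<Sum>j<length rs. l!j *\<^sub>R rs!j) = q \<and>
     sqrt (\<Sum>j<length rs. (l!j)^2) \<le> c)"

definition Fm :: "real \<Rightarrow> ((real^'n) list \<Rightarrow> (real^'n^'n) option) \<Rightarrow> (real^'n) list \<Rightarrow> ((real^'n) list \<times> real list) option" where
  "Fm c A qs = (if A qs = None then None else Some (Rrows c A qs, ellf c (Rrows c A qs) (last qs)))"

lemma Rrows_take:
  assumes "t \<le> length qs"
  shows "Rrows c A (take t qs) = concat (map (blk c A qs) [0..<Suc t])"
proof -
  have "blk c A (take t qs) k = blk c A qs k" if "k < Suc t" for k
  proof -
    have "k \<le> t" "k - 1 \<le> t" using that by auto
    thus ?thesis unfolding blk_def by (simp add: min_absorb1)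
  qed
  hence meq: "map (blk c A (take t qs)) [0..<Suc t] = map (blk c A qs) [0..<Suc t]" by simp
  have len: "length (take t qs) = t" using assms by simp
  show ?thesis unfolding Rrows_def len meq ..
qed

lemma ellf_prop:
  assumes "c > 0" "\<And>y. (q \<bullet> y)^2 \<le> c^2 * (y \<bullet> (sum_list (map outer rs) *v y))"
  shows "length (ellf c rs q) = length rs \<and> (\<Sum>j<length rs. ellf c rs q ! j *\<^sub>R rs!j) = q \<and>
     sqrt (\<Sum>j<length rs. (ellf c rs q ! j)^2) \<le> c"
  unfolding ellf_def using ell_exists[OF assms] by (rule someI_ex)

lemma trace_outer: "trace (outer r) = (norm r)^2"
  by (simp add: trace_def outer_def power2_norm_eq_inner inner_vec_def)

lemma trace_sum_outer: "trace (sum_list (map outer rs)) = (\<Sum>j<length rs. (norm (rs!j))^2)"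
proof -
  have "trace (sum_list (map outer rs)) = sum_list (map (\<lambda>r. (norm r)^2) rs)"
    by (induction rs) (simp_all add: trace_add trace_outer, simp add: trace_def)
  also have "\<dots> = (\<Sum>j<length rs. (norm (rs!j))^2)"
    unfolding sum_list_sum_nth by (simp add: atLeast0LessThan)
  finally show ?thesis .
qed

theorem lemma4p2:
  fixes \<gamma> C :: real
    and A :: "(real^'n) list \<Rightarrow> (real^'n^'n) option"
  assumes "\<gamma> > 0" and "C \<ge> 1"
  shows "\<exists>R0 F. \<forall>qs :: (real^'n) list. sdp_valid \<gamma> C A qs \<longrightarrow> fact_valid \<gamma> C R0 F qs"
proof -
  define c where "c = C * \<gamma>"
  have cp: "c > 0" unfolding c_def using assms by simp
  have c2: "c^2 = C^2 * \<gamma>^2" unfolding c_def by (simp add: power_mult_distrib)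
  have "\<forall>qs :: (real^'n) list. sdp_valid \<gamma> C A qs \<longrightarrow> fact_valid \<gamma> C (Rrows c A []) (Fm c A) qs"
  proof (intro allI impI)
    fix qs :: "(real^'n) list"
    assume V: "sdp_valid \<gamma> C A qs"
    obtain X0 where X0: "A [] = Some X0" "psd X0" using V unfolding sdp_valid_def by blast
    define RR where "RR s = concat (map (blk c A qs) [0..<Suc s])" for s
    define Xs where "Xs s = the (A (take s qs))" for s
    show "fact_valid \<gamma> C (Rrows c A []) (Fm c A) qs"
      unfolding fact_valid_def
    proof (intro ballI impI)
      fix t assume t: "t \<in> {1..length qs}"
        and prem: "\<forall>s\<in>{1..<t}. Fm c A (take s qs) \<noteq> None"
      have AS: "\<forall>s\<in>{1..<t}. A (take s qs) \<noteq> None"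
      proof
        fix s assume "s \<in> {1..<t}"
        hence "Fm c A (take s qs) \<noteq> None" using prem by blast
        thus "A (take s qs) \<noteq> None" unfolding Fm_def by (auto split: if_splits)
      qed
      have good: "\<exists>X. A (take s qs) = Some X \<and> psd X \<and> X \<succeq>\<^sub>L the (A (take (s - 1) qs)) \<and>
                X \<succeq>\<^sub>L outer (qs ! (s - 1)) \<and> trace X \<le> C\<^sup>2 * \<gamma>\<^sup>2 * real CARD('n)"
        if s: "s \<in> {1..<t}" for s
      proof -
        have "s \<in> {1..length qs}" using s t by auto
        moreover have "\<forall>s'\<in>{1..<s}. A (take s' qs) \<noteq> None" using AS s by auto
        ultimately have "(A (take s qs) = None \<and> \<not> (\<exists>X. psd X \<and> trace X \<le> \<gamma>\<^sup>2 * real CARD('n) \<and>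
                  (\<forall>i < s. X \<succeq>\<^sub>L outer (qs ! i)))) \<or> (\<exists>X. A (take s qs) = Some X \<and> psd X \<and>
                X \<succeq>\<^sub>L the (A (take (s - 1) qs)) \<and>
                X \<succeq>\<^sub>L outer (qs ! (s - 1)) \<and>
                trace X \<le> C\<^sup>2 * \<gamma>\<^sup>2 * real CARD('n))"
          using V unfolding sdp_valid_def by blast
        thus ?thesis using AS s by blast
      qed
      have Vt: "(A (take t qs) = None \<and>
           \<not> (\<exists>X. psd X \<and> trace X \<le> \<gamma>\<^sup>2 * real CARD('n) \<and>
                  (\<forall>i < t. X \<succeq>\<^sub>L outer (qs ! i))))
        \<or> (\<exists>X. A (take t qs) = Some X \<and> psd X \<and>
                X \<succeq>\<^sub>L the (A (take (t - 1) qs)) \<and>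
                X \<succeq>\<^sub>L outer (qs ! (t - 1)) \<and>
                trace X \<le> C\<^sup>2 * \<gamma>\<^sup>2 * real CARD('n))"
        using V t AS unfolding sdp_valid_def by blast
      show "(Fm c A (take t qs) = None \<and> gamma2 (take t qs) > \<gamma>)
        \<or> (Fm c A (take t qs) \<noteq> None \<and>
           (\<exists>D. fact_R (Rrows c A []) (Fm c A) qs t = fact_R (Rrows c A []) (Fm c A) qs (t - 1) @ D) \<and>
           length (fact_l (Fm c A) qs t) = length (fact_R (Rrows c A []) (Fm c A) qs t) \<and>
           (\<Sum>j < length (fact_R (Rrows c A []) (Fm c A) qs t).
               fact_l (Fm c A) qs t ! j *\<^sub>R fact_R (Rrows c A []) (Fm c A) qs t ! j) = qs ! (t - 1) \<and>
           sqrt (\<Sum>j < length (fact_R (Rrows c A []) (Fm c A) qs t). (norm (fact_R (Rrows c A []) (Fm c A) qs t ! j))\<^sup>2)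
               \<le> sqrt (real CARD('n)) \<and>
           (\<forall>s \<in> {1..t}. sqrt (\<Sum>j < length (fact_l (Fm c A) qs s). (fact_l (Fm c A) qs s ! j)\<^sup>2)
               \<le> C * \<gamma>))"
      proof (cases "A (take t qs) = None")
        case True
        with Vt have nf: "\<not> (\<exists>X. psd X \<and> trace X \<le> \<gamma>\<^sup>2 * real CARD('n) \<and>
                  (\<forall>i < t. X \<succeq>\<^sub>L outer (qs ! i)))" by auto
        have lt: "length (take t qs) = t" using t by simp
        have "\<not> (\<exists>X::real^'n^'n. psd X \<and> trace X \<le> \<gamma>^2 * real CARD('n) \<and>
                (\<forall>i<length (take t qs). X \<succeq>\<^sub>L outer (take t qs ! i)))"
          using nf unfolding lt by simp
        hence "gamma2 (take t qs) > \<gamma>" using gamma2_gt assms(1) by (metis less_eq_real_def)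
        thus ?thesis using True unfolding Fm_def by simp
      next
        case False
        have goodall: "\<exists>X. A (take s qs) = Some X \<and> psd X \<and> X \<succeq>\<^sub>L the (A (take (s - 1) qs)) \<and>
                X \<succeq>\<^sub>L outer (qs ! (s - 1)) \<and> trace X \<le> C\<^sup>2 * \<gamma>\<^sup>2 * real CARD('n)"
          if s: "s \<in> {1..t}" for s
        proof (cases "s = t")
          case True thus ?thesis using Vt False by blast
        next
          case False thus ?thesis using good s by auto
        qed
        have Anone: "A (take s qs) \<noteq> None" if "s \<in> {1..t}" for s using goodall[OF that] by auto
        have sq: "s \<le> length qs" if "s \<le> t" for s using that t by auto
        have Xs0: "Xs 0 = X0" unfolding Xs_def using X0 by simp
        have RRsum: "sum_list (map outer (RR s)) = (1/c^2) *\<^sub>R Xs s" if "s \<le> t" for s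
          using that
        proof (induction s)
          case 0
          have "RR 0 = fac ((1/c^2) *\<^sub>R X0)" unfolding RR_def blk_def using X0 by simp
          thus ?case using fac[OF psd_scale[OF X0(2)]] Xs0 by simp
        next
          case (Suc s)
          have "Suc s \<in> {1..t}" using Suc.prems by simp
          from goodall[OF this] obtain X where X: "A (take (Suc s) qs) = Some X"
            "X \<succeq>\<^sub>L the (A (take s qs))" by auto
          have blkS: "blk c A qs (Suc s) = fac ((1/c^2) *\<^sub>R (Xs (Suc s) - Xs s))"
            unfolding blk_def Xs_def by simp
          have ps: "psd ((1/c^2) *\<^sub>R (Xs (Suc s) - Xs s))"
            using X unfolding Xs_def loewner_ge_def by (intro psd_scale) auto
          have "RR (Suc s) = RR s @ blk c A qs (Suc s)" unfolding RR_def by simp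
          hence "sum_list (map outer (RR (Suc s))) = sum_list (map outer (RR s)) + (1/c^2) *\<^sub>R (Xs (Suc s) - Xs s)"
            using fac[OF ps] blkS by simp
          also have "\<dots> = (1/c^2) *\<^sub>R Xs (Suc s)" using Suc by (simp add: algebra_simps)
          finally show ?case .
        qed
        have fR: "fact_R (Rrows c A []) (Fm c A) qs s = RR s" if "s \<le> t" for s
        proof (cases "s = 0")
          case True
          have "Rrows c A [] = RR 0" unfolding Rrows_def RR_def blk_def by simp
          thus ?thesis using True unfolding fact_R_def by simp
        next
          case False
          hence "s \<in> {1..t}" using that by simp
          hence "A (take s qs) \<noteq> None" by (rule Anone)
          thus ?thesis using False Rrows_take[OF sq[OF that]] unfolding fact_R_def Fm_def RR_def by auto
        qed
        have fl: "fact_l (Fm c A) qs s = ellf c (RR s) (qs ! (s - 1))" if "s \<in> {1..t}" for s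
        proof -
          have "A (take s qs) \<noteq> None" using that by (rule Anone)
          moreover have "last (take s qs) = qs ! (s - 1)"
          proof -
            have sl: "s \<le> length qs" "1 \<le> s" using that sq[of s] by auto
            hence "take s qs \<noteq> []" by (cases qs) auto
            hence "last (take s qs) = take s qs ! (length (take s qs) - 1)" by (rule last_conv_nth)
            also have "length (take s qs) = s" using sl by simp
            also have "take s qs ! (s - 1) = qs ! (s - 1)" using sl by simp
            finally show ?thesis .
          qed
          ultimately show ?thesis using Rrows_take[OF sq] that unfolding fact_l_def Fm_def RR_def by auto
        qed
        have ellP: "length (ellf c (RR s) (qs ! (s - 1))) = length (RR s) \<and>
            (\<Sum>j<length (RR s). ellf c (RR s) (qs ! (s - 1)) ! j *\<^sub>R RR s ! j) = qs ! (s - 1) \<and>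
            sqrt (\<Sum>j<length (RR s). (ellf c (RR s) (qs ! (s - 1)) ! j)^2) \<le> c" if s: "s \<in> {1..t}" for s
        proof (rule ellf_prop[OF cp])
          fix y
          obtain X where X: "A (take s qs) = Some X" "X \<succeq>\<^sub>L outer (qs ! (s - 1))" using goodall[OF s] by auto
          have "0 \<le> y \<bullet> ((X - outer (qs ! (s - 1))) *v y)" using X(2) unfolding loewner_ge_def psd_def by blast
          hence "(qs ! (s - 1) \<bullet> y)^2 \<le> y \<bullet> (X *v y)"
            by (simp add: matrix_vector_mult_diff_rdistrib inner_diff_right outer_mv power2_eq_square) (metis inner_commute)
          also have "\<dots> = c^2 * (y \<bullet> (((1/c^2) *\<^sub>R X) *v y))"
            using cp by (simp add: scaleR_matrix_vector_assoc[symmetric])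
          also have "(1/c^2) *\<^sub>R X = sum_list (map outer (RR s))"
            using RRsum[of s] s X(1) unfolding Xs_def by simp
          finally show "(qs ! (s - 1) \<bullet> y)^2 \<le> c^2 * (y \<bullet> (sum_list (map outer (RR s)) *v y))" .
        qed
        have t1: "t \<in> {1..t}" "t \<le> t" "t - 1 \<le> t" using t by auto
        have frob: "sqrt (\<Sum>j < length (RR t). (norm (RR t ! j))\<^sup>2) \<le> sqrt (real CARD('n))"
        proof -
          obtain X where X: "A (take t qs) = Some X" "trace X \<le> C\<^sup>2 * \<gamma>\<^sup>2 * real CARD('n)"
            using goodall[OF t1(1)] by auto
          have "(\<Sum>j < length (RR t). (norm (RR t ! j))\<^sup>2) = trace ((1/c^2) *\<^sub>R X)"
            using RRsum[OF t1(2)] X(1) unfolding Xs_def trace_sum_outer[symmetric] by simp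
          also have "\<dots> = trace X / c^2" by (simp add: trace_def sum_divide_distrib)
          also have "\<dots> \<le> real CARD('n)"
          proof -
            have "c^2 > 0" using cp by simp
            moreover have "trace X \<le> real CARD('n) * c^2" using X(2) c2 by (simp add: mult_ac)
            ultimately show ?thesis by (simp add: divide_le_eq)
          qed
          finally show ?thesis by (rule real_sqrt_le_mono)
        qed
        show ?thesis
        proof (rule disjI2, intro conjI)
          show "Fm c A (take t qs) \<noteq> None" using False unfolding Fm_def by simp
          have "RR t = RR (t - 1) @ blk c A qs t"
          proof -
            obtain t' where tt: "t = Suc t'" using t by (cases t) auto
            show ?thesis unfolding RR_def tt by simp
          qed
          thus "\<exists>D. fact_R (Rrows c A []) (Fm c A) qs t = fact_R (Rrows c A []) (Fm c A) qs (t - 1) @ D"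
            unfolding fR[OF t1(2)] fR[OF t1(3)] by blast
          show "length (fact_l (Fm c A) qs t) = length (fact_R (Rrows c A []) (Fm c A) qs t)"
            using fl[OF t1(1)] fR[OF t1(2)] ellP[OF t1(1)] by simp
          show "(\<Sum>j < length (fact_R (Rrows c A []) (Fm c A) qs t).
               fact_l (Fm c A) qs t ! j *\<^sub>R fact_R (Rrows c A []) (Fm c A) qs t ! j) = qs ! (t - 1)"
            using fl[OF t1(1)] fR[OF t1(2)] ellP[OF t1(1)] by simp
          show "sqrt (\<Sum>j < length (fact_R (Rrows c A []) (Fm c A) qs t). (norm (fact_R (Rrows c A []) (Fm c A) qs t ! j))\<^sup>2)
               \<le> sqrt (real CARD('n))" using frob fR[OF t1(2)] by simp
          show "\<forall>s \<in> {1..t}. sqrt (\<Sum>j < length (fact_l (Fm c A) qs s). (fact_l (Fm c A) qs s ! j)\<^sup>2) \<le> C * \<gamma>"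
          proof
            fix s assume s: "s \<in> {1..t}"
            show "sqrt (\<Sum>j < length (fact_l (Fm c A) qs s). (fact_l (Fm c A) qs s ! j)\<^sup>2) \<le> C * \<gamma>"
              using fl[OF s] ellP[OF s] unfolding c_def by simp
          qed
        qed
      qed
    qed
  qed
  thus ?thesis by blast
qed

end
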